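(* Let $\mathbf{A}\in\mathbb{R}^{m\times n}$, $\mathbf{b}\in\mathbb{R}^m$, $\mathbf{c}\in\mathbb{R}^n$ define the integer linear program $\min_{\mathbf{x}}\{\mathbf{c}^\top\mathbf{x} \mid \mathbf{A}\mathbf{x}\le \mathbf{b},\ \mathbf{x}\in\mathbb{Z}^n\}$, with bipartite representation $\mathcal{A}=\begin{bmatrix}\mathbf{A}&\mathbf{b}\\ \mathbf{c}^\top&0\end{bmatrix}\in\mathbb{R}^{(m+1)\times(n+1)}$. Let $f_\theta$ be a map from such $(m+1)\times(n+1)$ matrices to $\mathbb{R}^n$ that is permutation-equivariant with respect to variables and permutation-invariant with respect to constraints, i.e. $f_\theta(\pi^c(\mathcal{M}))=\pi^v(f_\theta(\mathcal{M}))$ for all $\pi\in S_n$ and $f_\theta(\sigma^r(\mathcal{M}))=f_\theta(\mathcal{M})$ for all $\sigma\in S_m$, for every input $\mathcal{M}$. If $\pi\in S_n$ is a formulation symmetry of the ILP, then $f_\theta(\mathcal{A})_i=f_\theta(\mathcal{A})_{\pi(i)}$ for all $i\in\{1,\dots,n\}$. Furthermore, for every orbit $\mathcal{O}$ of $\{1,\dots,n\}$ under the symmetry group $\mathcal{G}$ of the ILP, $f_\theta(\mathcal{A})_i=f_\theta(\mathcal{A})_j$ for all $i,j\in\mathcal{O}$.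
   Context: $S_n$ denotes the set of all permutations (bijections) of $\{1,\dots,n\}$. For $\pi\in S_n$, a vector $\mathbf{y}$ and a matrix $\mathbf{X}$ with at least $n$ rows/columns: $\pi^v(\mathbf{y})=[y_{\pi(1)},\dots,y_{\pi(n)},y_{n+1},\dots]^\top$ (permuting the top-most $n$ entries), $\pi^r(\mathbf{X})=[\mathbf{X}_{\pi(1),:},\dots,\mathbf{X}_{\pi(n),:},\mathbf{X}_{n+1,:},\dots]^\top$ (permuting the top-most $n$ rows), and $\pi^c(\mathbf{X})=[\mathbf{X}_{:,\pi(1)},\dots,\mathbf{X}_{:,\pi(n)},\mathbf{X}_{:,n+1},\dots]$ (permuting the left-most $n$ columns); analogously for $\sigma\in S_m$. A permutation $\pi\in S_n$ is a formulation symmetry of the ILP if there exists $\sigma\in S_m$ with $\pi^v(\mathbf{c})=\mathbf{c}$, $\sigma^v(\mathbf{b})=\mathbf{b}$, and $A_{\sigma(i),\pi(j)}=A_{i,j}$ for all $i,j$. The set of all formulation symmetries forms a group $\mathcal{G}$ (the symmetry group). The orbit of $i\in\{1,\dots,n\}$ under $\mathcal{G}$ is $\{\pi(i)\mid \pi\in\mathcal{G}\}$. *)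

theory Defs
  imports Complex_Main "HOL-Combinatorics.Permutations"
begin

text \<open>Conventions: indices are 0-based. Variables are 0..<n, constraints 0..<m.
  A permutation in S_n is a function pi with pi permutes {..<n}
  (identity outside {..<n}), so permuting the top-most n entries is
  composition with pi.\<close>

definition perm_v :: "(nat \<Rightarrow> nat) \<Rightarrow> (nat \<Rightarrow> real) \<Rightarrow> (nat \<Rightarrow> real)" where
  "perm_v p y = (\<lambda>i. y (p i))"

definition perm_r :: "(nat \<Rightarrow> nat) \<Rightarrow> (nat \<Rightarrow> nat \<Rightarrow> real) \<Rightarrow> (nat \<Rightarrow> nat \<Rightarrow> real)" where
  "perm_r p X = (\<lambda>i j. X (p i) j)"

definition perm_c :: "(nat \<Rightarrow> nat) \<Rightarrow> (nat \<Rightarrow> nat \<Rightarrow> real) \<Rightarrow> (nat \<Rightarrow> nat \<Rightarrow> real)" where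
  "perm_c p X = (\<lambda>i j. X i (p j))"

text \<open>(m+1) x (n+1) real matrices: entries outside rows 0..m / columns 0..n are zero.\<close>
definition mats :: "nat \<Rightarrow> nat \<Rightarrow> (nat \<Rightarrow> nat \<Rightarrow> real) set" where
  "mats m n = {M. \<forall>i j. (m < i \<or> n < j) \<longrightarrow> M i j = 0}"

definition bip :: "nat \<Rightarrow> nat \<Rightarrow> (nat \<Rightarrow> nat \<Rightarrow> real) \<Rightarrow> (nat \<Rightarrow> real) \<Rightarrow> (nat \<Rightarrow> real)
    \<Rightarrow> (nat \<Rightarrow> nat \<Rightarrow> real)" where
  "bip m n A b c = (\<lambda>i j.
     if i < m \<and> j < n then A i j
     else if i < m \<and> j = n then b i
     else if i = m \<and> j < n then c j
     else 0)"

definition formulation_symmetry ::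
  "nat \<Rightarrow> nat \<Rightarrow> (nat \<Rightarrow> nat \<Rightarrow> real) \<Rightarrow> (nat \<Rightarrow> real) \<Rightarrow> (nat \<Rightarrow> real) \<Rightarrow> (nat \<Rightarrow> nat) \<Rightarrow> bool" where
  "formulation_symmetry m n A b c p \<longleftrightarrow>
     p permutes {..<n} \<and>
     (\<exists>s. s permutes {..<m} \<and>
          (\<forall>j<n. perm_v p c j = c j) \<and>
          (\<forall>i<m. perm_v s b i = b i) \<and>
          (\<forall>i<m. \<forall>j<n. A (s i) (p j) = A i j))"

definition symmetry_group ::
  "nat \<Rightarrow> nat \<Rightarrow> (nat \<Rightarrow> nat \<Rightarrow> real) \<Rightarrow> (nat \<Rightarrow> real) \<Rightarrow> (nat \<Rightarrow> real) \<Rightarrow> (nat \<Rightarrow> nat) set" where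
  "symmetry_group m n A b c = {p. formulation_symmetry m n A b c p}"

definition sym_orbit ::
  "nat \<Rightarrow> nat \<Rightarrow> (nat \<Rightarrow> nat \<Rightarrow> real) \<Rightarrow> (nat \<Rightarrow> real) \<Rightarrow> (nat \<Rightarrow> real) \<Rightarrow> nat \<Rightarrow> nat set" where
  "sym_orbit m n A b c i = {p i | p. p \<in> symmetry_group m n A b c}"

end

theory Submission
  imports Defs
begin

lemma key:
  fixes m n :: nat
    and A :: "nat \<Rightarrow> nat \<Rightarrow> real" and b c :: "nat \<Rightarrow> real"
    and f :: "(nat \<Rightarrow> nat \<Rightarrow> real) \<Rightarrow> (nat \<Rightarrow> real)"
    and p :: "nat \<Rightarrow> nat"
  assumes equiv: "\<And>M q. M \<in> mats m n \<Longrightarrow> q permutes {..<n} \<Longrightarrow>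
                     \<forall>i<n. f (perm_c q M) i = perm_v q (f M) i"
      and inv: "\<And>M s. M \<in> mats m n \<Longrightarrow> s permutes {..<m} \<Longrightarrow>
                     \<forall>i<n. f (perm_r s M) i = f M i"
      and sym: "formulation_symmetry m n A b c p"
  shows "\<forall>i<n. f (bip m n A b c) i = f (bip m n A b c) (p i)"
proof -
  let ?M = "bip m n A b c"
  from sym have p: "p permutes {..<n}" by (simp add: formulation_symmetry_def)
  from sym obtain s where s: "s permutes {..<m}" and hc: "\<forall>j<n. perm_v p c j = c j"
    and hb: "\<forall>i<m. perm_v s b i = b i" and hA: "\<forall>i<m. \<forall>j<n. A (s i) (p j) = A i j"
    by (auto simp: formulation_symmetry_def)
  have sin: "\<And>i. i < m \<Longrightarrow> s i < m" using s by (meson lessThan_iff permutes_in_image)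
  have pin: "\<And>j. j < n \<Longrightarrow> p j < n" using p by (meson lessThan_iff permutes_in_image)
  have sout: "\<And>i. \<not> i < m \<Longrightarrow> s i = i" using s by (meson lessThan_iff permutes_not_in)
  have pout: "\<And>j. \<not> j < n \<Longrightarrow> p j = j" using p by (meson lessThan_iff permutes_not_in)
  have Mm: "?M \<in> mats m n" by (auto simp: mats_def bip_def)
  have Mcm: "perm_c p ?M \<in> mats m n"
    using pout pin by (auto simp: mats_def bip_def perm_c_def)
  have eq: "perm_r s (perm_c p ?M) = ?M"
  proof (intro ext)
    fix i j
    show "perm_r s (perm_c p ?M) i j = ?M i j"
    proof (cases "i < m")
      case True
      then show ?thesis
        using hA hb sin pin pout True
        by (cases "j < n") (auto simp: perm_r_def perm_c_def bip_def perm_v_def)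
    next
      case False
      then show ?thesis using sout[OF False] hc pin pout
        by (cases "j < n") (auto simp: perm_r_def perm_c_def bip_def perm_v_def)
    qed
  qed
  show ?thesis
  proof (intro allI impI)
    fix i assume i: "i < n"
    have "f ?M i = f (perm_r s (perm_c p ?M)) i" by (simp add: eq)
    also have "\<dots> = f (perm_c p ?M) i" using inv[OF Mcm s] i by blast
    also have "\<dots> = f ?M (p i)" using equiv[OF Mm p] i by (simp add: perm_v_def)
    finally show "f ?M i = f ?M (p i)" .
  qed
qed

theorem proposition1:
  fixes m n :: nat
    and A :: "nat \<Rightarrow> nat \<Rightarrow> real" and b c :: "nat \<Rightarrow> real"
    and f :: "(nat \<Rightarrow> nat \<Rightarrow> real) \<Rightarrow> (nat \<Rightarrow> real)"
    and p :: "nat \<Rightarrow> nat"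
  assumes equiv: "\<And>M q. M \<in> mats m n \<Longrightarrow> q permutes {..<n} \<Longrightarrow>
                     \<forall>i<n. f (perm_c q M) i = perm_v q (f M) i"
      and inv: "\<And>M s. M \<in> mats m n \<Longrightarrow> s permutes {..<m} \<Longrightarrow>
                     \<forall>i<n. f (perm_r s M) i = f M i"
      and sym: "formulation_symmetry m n A b c p"
  shows "(\<forall>i<n. f (bip m n A b c) i = f (bip m n A b c) (p i)) \<and>
         (\<forall>k<n. \<forall>i\<in>sym_orbit m n A b c k. \<forall>j\<in>sym_orbit m n A b c k.
              f (bip m n A b c) i = f (bip m n A b c) j)"
proof
  show "\<forall>i<n. f (bip m n A b c) i = f (bip m n A b c) (p i)"
    using key[OF equiv inv sym] by blast
next
  show "\<forall>k<n. \<forall>i\<in>sym_orbit m n A b c k. \<forall>j\<in>sym_orbit m n A b c k.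
              f (bip m n A b c) i = f (bip m n A b c) j"
  proof (intro allI impI ballI)
    fix k i j assume k: "k < n" and i: "i \<in> sym_orbit m n A b c k"
      and j: "j \<in> sym_orbit m n A b c k"
    from i obtain q where q: "formulation_symmetry m n A b c q" "i = q k"
      by (auto simp: sym_orbit_def symmetry_group_def)
    from j obtain r where r: "formulation_symmetry m n A b c r" "j = r k"
      by (auto simp: sym_orbit_def symmetry_group_def)
    have "f (bip m n A b c) k = f (bip m n A b c) i"
      using key[OF equiv inv q(1)] k q(2) by blast
    moreover have "f (bip m n A b c) k = f (bip m n A b c) j"
      using key[OF equiv inv r(1)] k r(2) by blast
    ultimately show "f (bip m n A b c) i = f (bip m n A b c) j" by simp
  qed
qed

end
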